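(* Let $G$ be an undirected graph and $n\ge 4$ an even integer. Then $G$ admits a homomorphism to the undirected cycle $C_{n-1}$ on $n-1$ vertices if and only if $G$ admits an orientation that contains no induced subgraph isomorphic to a member of $F_n$.
   Context: Graph homomorphisms are vertex maps sending edges to edges (for digraphs: arcs to arcs). An orientation of an undirected graph $G$ is an oriented graph obtained by choosing exactly one direction for each edge. For $n\ge 3$, $Q_n$ is the oriented path $(q_0,\dots,q_{n-1})$ on $n$ distinct vertices, with exactly one arc between $q_i$ and $q_{i+1}$ for each $i$ and no other arcs, such that: the first two arcs are $q_0\to q_1$ and $q_1\to q_2$; the subpath $(q_1,\dots,q_{n-2})$ is alternating (consecutive arcs have opposite directions); and the last two arcs have the same direction. For even $n\ge4$, $F_n$ denotes the (finite, up to isomorphism) set of surjective homomorphic images of $Q_n$, i.e. the oriented graphs $H$ (no loops, no pair of opposite arcs) for which there is a homomorphism $Q_n\to H$ that is surjective on vertices. *)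

theory Defs
  imports Main
begin

definition undirected_graph :: "'a set \<Rightarrow> ('a \<Rightarrow> 'a \<Rightarrow> bool) \<Rightarrow> bool" where
  "undirected_graph V E \<longleftrightarrow>
     (\<forall>x y. E x y \<longrightarrow> x \<in> V \<and> y \<in> V) \<and>
     (\<forall>x y. E x y \<longrightarrow> E y x) \<and> (\<forall>x. \<not> E x x)"

definition oriented_graph :: "'a set \<Rightarrow> ('a \<Rightarrow> 'a \<Rightarrow> bool) \<Rightarrow> bool" where
  "oriented_graph V A \<longleftrightarrow>
     (\<forall>x y. A x y \<longrightarrow> x \<in> V \<and> y \<in> V) \<and>
     (\<forall>x. \<not> A x x) \<and> (\<forall>x y. \<not> (A x y \<and> A y x))"

definition is_orientation :: "('a \<Rightarrow> 'a \<Rightarrow> bool) \<Rightarrow> ('a \<Rightarrow> 'a \<Rightarrow> bool) \<Rightarrow> bool" where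
  "is_orientation E A \<longleftrightarrow>
     (\<forall>x y. A x y \<longrightarrow> E x y) \<and>
     (\<forall>x y. E x y \<longrightarrow> A x y \<or> A y x) \<and>
     (\<forall>x y. \<not> (A x y \<and> A y x))"

definition cycle_adj :: "nat \<Rightarrow> nat \<Rightarrow> nat \<Rightarrow> bool" where
  "cycle_adj m i j \<longleftrightarrow> i < m \<and> j < m \<and> (j = (i + 1) mod m \<or> i = (j + 1) mod m)"

definition is_hom :: "'a set \<Rightarrow> ('a \<Rightarrow> 'a \<Rightarrow> bool) \<Rightarrow> 'b set \<Rightarrow> ('b \<Rightarrow> 'b \<Rightarrow> bool) \<Rightarrow> ('a \<Rightarrow> 'b) \<Rightarrow> bool" where
  "is_hom V E W F f \<longleftrightarrow> (\<forall>x\<in>V. f x \<in> W) \<and> (\<forall>x y. E x y \<longrightarrow> F (f x) (f y))"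

text \<open>Q is (an instance of) the oriented path Q_n on vertices q_i = i, i < n.\<close>
definition is_Q :: "nat \<Rightarrow> (nat \<Rightarrow> nat \<Rightarrow> bool) \<Rightarrow> bool" where
  "is_Q n Q \<longleftrightarrow> 3 \<le> n \<and>
     (\<forall>i j. Q i j \<longrightarrow> i < n \<and> j < n \<and> (j = i + 1 \<or> i = j + 1)) \<and>
     (\<forall>i. i + 1 < n \<longrightarrow> (Q i (i+1) \<or> Q (i+1) i) \<and> \<not> (Q i (i+1) \<and> Q (i+1) i)) \<and>
     Q 0 1 \<and> Q 1 2 \<and>
     (\<forall>i. 1 \<le> i \<and> i + 2 \<le> n - 2 \<longrightarrow> (Q i (i+1) \<longleftrightarrow> Q (i+2) (i+1))) \<and>
     (Q (n-3) (n-2) \<longleftrightarrow> Q (n-2) (n-1))"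

text \<open>Members of F_n (represented on nat vertices; every member has at most n vertices):
  oriented graphs H admitting a vertex-surjective homomorphism from Q_n.\<close>
definition in_F :: "nat \<Rightarrow> nat set \<Rightarrow> (nat \<Rightarrow> nat \<Rightarrow> bool) \<Rightarrow> bool" where
  "in_F n VH AH \<longleftrightarrow> oriented_graph VH AH \<and>
     (\<exists>Q h. is_Q n Q \<and> is_hom {0..<n} Q VH AH h \<and> h ` {0..<n} = VH)"

definition has_induced_copy ::
  "'a set \<Rightarrow> ('a \<Rightarrow> 'a \<Rightarrow> bool) \<Rightarrow> nat set \<Rightarrow> (nat \<Rightarrow> nat \<Rightarrow> bool) \<Rightarrow> bool" where
  "has_induced_copy V A VH AH \<longleftrightarrow>
     (\<exists>e. inj_on e VH \<and> e ` VH \<subseteq> V \<and>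
          (\<forall>x\<in>VH. \<forall>y\<in>VH. AH x y \<longleftrightarrow> A (e x) (e y)))"

end

theory Submission
  imports Defs
begin


lemma cyc_iff:
  assumes "3 \<le> m"
  shows "cycle_adj m i j \<longleftrightarrow> i<m \<and> j<m \<and> (j = i+1 \<or> i = j+1 \<or> (i = m-1 \<and> j = 0) \<or> (j = m-1 \<and> i = 0))"
proof (cases "i < m \<and> j < m")
  case True
  have e1: "(i+1) mod m = (if i+1 = m then 0 else i+1)" using True by auto
  have e2: "(j+1) mod m = (if j+1 = m then 0 else j+1)" using True by auto
  show ?thesis unfolding cycle_adj_def e1 e2 using True assms by auto
next
  case False
  then show ?thesis unfolding cycle_adj_def by auto
qed

definition Ocyc :: "nat \<Rightarrow> nat \<Rightarrow> nat \<Rightarrow> bool" where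
  "Ocyc m i j \<longleftrightarrow> cycle_adj m i j \<and> (i = 0 \<or> (odd i \<and> 3 \<le> i) \<or> (i = 1 \<and> j = 2))"

lemma O_total: "odd m \<Longrightarrow> 3 \<le> m \<Longrightarrow> cycle_adj m i j \<Longrightarrow> Ocyc m i j \<or> Ocyc m j i"
  unfolding Ocyc_def by (simp add: cyc_iff) presburger

lemma O_anti: "odd m \<Longrightarrow> 3 \<le> m \<Longrightarrow> \<not> (Ocyc m i j \<and> Ocyc m j i)"
  unfolding Ocyc_def by (simp add: cyc_iff) presburger

lemma O_mid: "odd m \<Longrightarrow> 3 \<le> m \<Longrightarrow> Ocyc m a b \<Longrightarrow> Ocyc m b c \<Longrightarrow> b = 1"
  unfolding Ocyc_def by (simp add: cyc_iff) presburger

lemma O_out: "odd m \<Longrightarrow> 3 \<le> m \<Longrightarrow> Ocyc m k j \<Longrightarrow> odd k \<Longrightarrow> k + 2 \<le> m \<Longrightarrow> j = k+1 \<or> (j = k - 1 \<and> 3 \<le> k)"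
  unfolding Ocyc_def by (simp add: cyc_iff) presburger

lemma O_in: "odd m \<Longrightarrow> 3 \<le> m \<Longrightarrow> Ocyc m j k \<Longrightarrow> even k \<Longrightarrow> 2 \<le> k \<Longrightarrow> k + 3 \<le> m \<Longrightarrow> j = k+1 \<or> j = k - 1"
  unfolding Ocyc_def by (simp add: cyc_iff) presburger



definition dirf :: "nat \<Rightarrow> nat \<Rightarrow> bool" where
  "dirf n i \<longleftrightarrow> i = 0 \<or> odd i \<or> i = n - 2"

lemma Qdir_mid:
  assumes Q: "is_Q n Q"
  shows "1 \<le> i \<Longrightarrow> i + 3 \<le> n \<Longrightarrow> (Q i (i+1) \<longleftrightarrow> odd i)"
proof (induction i rule: nat_induct_at_least)
  case base
  then show ?case using Q unfolding is_Q_def by (auto simp: numeral_2_eq_2)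
next
  case (Suc i)
  have cd: "\<forall>j. 1 \<le> j \<and> j + 2 \<le> n - 2 \<longrightarrow> (Q j (j+1) \<longleftrightarrow> Q (j+2) (j+1))"
    using Q unfolding is_Q_def by blast
  have cl: "\<forall>j. j+1<n \<longrightarrow> (Q j (j+1) \<or> Q (j+1) j) \<and> \<not>(Q j (j+1) \<and> Q (j+1) j)"
    using Q unfolding is_Q_def by blast
  have d: "Q i (Suc i) \<longleftrightarrow> Q (Suc (Suc i)) (Suc i)" using cd[rule_format, of i] Suc.prems Suc.hyps by simp
  have b: "Q (Suc i) (Suc (Suc i)) \<longleftrightarrow> \<not> Q (Suc (Suc i)) (Suc i)"
    using cl[rule_format, of "Suc i"] Suc.prems by auto
  have ih: "Q i (Suc i) \<longleftrightarrow> odd i" using Suc by simp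
  show ?case using ih d b by simp
qed

lemma Qdir:
  assumes Q: "is_Q n Q" and ev: "even n" and i: "i + 1 < n"
  shows "(Q i (i+1) \<longleftrightarrow> dirf n i) \<and> (Q (i+1) i \<longleftrightarrow> \<not> dirf n i)"
proof -
  have n3: "3 \<le> n" using Q unfolding is_Q_def by auto
  have n4: "4 \<le> n" using n3 ev by presburger
  have ex: "(Q i (i+1) \<or> Q (i+1) i) \<and> \<not> (Q i (i+1) \<and> Q (i+1) i)" using Q i unfolding is_Q_def by auto
  have "Q i (i+1) \<longleftrightarrow> dirf n i"
  proof (cases "i = 0")
    case True then show ?thesis using Q unfolding is_Q_def dirf_def by auto
  next
    case False
    show ?thesis
    proof (cases "i + 3 \<le> n")
      case True
      then have "i \<noteq> n - 2" by auto
      then show ?thesis using Qdir_mid[OF Q, of i] True False unfolding dirf_def by auto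
    next
      case F2: False
      then have ii: "i = n - 2" using i by auto
      have a1: "n - 3 + 1 = n - 2" "n - 2 + 1 = n - 1" using n4 by auto
      have "Q (n-3) (n-3+1) \<longleftrightarrow> odd (n-3)" using Qdir_mid[OF Q, of "n-3"] n4 by auto
      then have "Q (n-3) (n-2)" using ev n4 a1 by auto
      moreover have "Q (n-3) (n-2) \<longleftrightarrow> Q (n-2) (n-1)" using Q unfolding is_Q_def by auto
      ultimately show ?thesis using ii a1 unfolding dirf_def by auto
    qed
  qed
  then show ?thesis using ex by auto
qed

lemma no_walk:
  fixes p :: "nat \<Rightarrow> nat"
  assumes om: "odd m" and m3: "3 \<le> m" and nm: "n = m + 1"
    and arcs: "\<And>i. i + 1 < n \<Longrightarrow> (if dirf n i then Ocyc m (p i) (p (i+1)) else Ocyc m (p (i+1)) (p i))"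
  shows False
proof -
  have inv: "1 \<le> i \<Longrightarrow> i + 2 \<le> n \<Longrightarrow> 1 \<le> p i \<and> p i \<le> i \<and> (even (p i) \<longleftrightarrow> even i)" for i
  proof (induction i rule: nat_induct_at_least)
    case base
    have "dirf n 0" "dirf n 1" unfolding dirf_def by auto
    then have "Ocyc m (p 0) (p 1)" "Ocyc m (p 1) (p 2)" using arcs[of 0] arcs[of 1] base nm m3 by (auto simp: numeral_2_eq_2)
    then have "p 1 = 1" using O_mid om m3 by blast
    then show ?case by auto
  next
    case (Suc i)
    have IH: "1 \<le> p i \<and> p i \<le> i \<and> (even (p i) \<longleftrightarrow> even i)" using Suc by auto
    show ?case
    proof (cases "odd i")
      case True
      then have "dirf n i" unfolding dirf_def by auto
      then have "Ocyc m (p i) (p (i+1))" using arcs[of i] Suc.prems by auto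
      moreover have "odd (p i)" "p i + 2 \<le> m" using IH True Suc.prems nm by auto
      ultimately have "p (i+1) = p i + 1 \<or> (p (i+1) = p i - 1 \<and> 3 \<le> p i)" using O_out om m3 by blast
      then show ?thesis using IH True by auto
    next
      case False
      then have "i \<noteq> n - 2" using Suc.prems by auto
      then have "\<not> dirf n i" using False Suc.hyps unfolding dirf_def by auto
      then have "Ocyc m (p (i+1)) (p i)" using arcs[of i] Suc.prems by auto
      moreover have ev: "even (p i)" using IH False by auto
      moreover have "p i \<noteq> 1" using ev by auto
      then have "2 \<le> p i" using IH by auto
      moreover have "i \<noteq> m - 2" using False om m3 by auto
      then have "p i + 3 \<le> m" using IH Suc.prems nm by auto
      ultimately have "p (i+1) = p i + 1 \<or> p (i+1) = p i - 1" using O_in om m3 by blast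
      then show ?thesis using IH False \<open>2 \<le> p i\<close> by auto
    qed
  qed
  have "dirf n (n-3)" "dirf n (n-2)" using om nm m3 unfolding dirf_def by auto
  moreover have "n - 3 + 1 = n - 2" "n - 2 + 1 = n - 1" "n-2+1 < n" using nm m3 by auto
  ultimately have "Ocyc m (p (n-3)) (p (n-2))" "Ocyc m (p (n-2)) (p (n-1))"
    using arcs[of "n-3"] arcs[of "n-2"] by auto
  then have "p (n-2) = 1" using O_mid om m3 by blast
  moreover have "even (p (n-2))" using inv[of "n-2"] nm m3 om by auto
  ultimately show False by auto
qed



definition Mv :: "('a \<Rightarrow> 'a \<Rightarrow> bool) \<Rightarrow> 'a \<Rightarrow> bool" where
  "Mv A x \<longleftrightarrow> (\<exists>a. A a x) \<and> (\<exists>b. A x b)"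

definition stp :: "('a \<Rightarrow> 'a \<Rightarrow> bool) \<Rightarrow> (nat \<Rightarrow> 'a) \<Rightarrow> nat \<Rightarrow> bool" where
  "stp A w i \<longleftrightarrow> (if even i then A (w i) (w (Suc i)) else A (w (Suc i)) (w i))"

definition Wk :: "('a \<Rightarrow> 'a \<Rightarrow> bool) \<Rightarrow> nat \<Rightarrow> 'a \<Rightarrow> bool" where
  "Wk A k x \<longleftrightarrow> (\<exists>w. Mv A (w 0) \<and> w k = x \<and> (\<forall>i<k. stp A w i))"

lemma Wk_0: "Mv A x \<Longrightarrow> Wk A 0 x"
  unfolding Wk_def by (rule exI[of _ "\<lambda>_. x"]) simp

lemma Wk_0D: "Wk A 0 x \<Longrightarrow> Mv A x"
  unfolding Wk_def by auto

lemma stp_upd: "i < k \<Longrightarrow> stp A (w(Suc k := y)) i = stp A w i"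
  unfolding stp_def by simp

lemma Wk_ext: "Wk A k x \<Longrightarrow> (\<And>w. w k = x \<Longrightarrow> stp A (w(Suc k := y)) k) \<Longrightarrow> Wk A (Suc k) y"
proof -
  assume W: "Wk A k x" and s: "\<And>w. w k = x \<Longrightarrow> stp A (w(Suc k := y)) k"
  then obtain w where w: "Mv A (w 0)" "w k = x" "\<forall>i<k. stp A w i"
    unfolding Wk_def by blast
  have "\<forall>i<Suc k. stp A (w(Suc k := y)) i"
  proof (intro allI impI)
    fix i assume "i < Suc k"
    then have "i < k \<or> i = k" by auto
    then show "stp A (w(Suc k := y)) i"
    proof
      assume "i < k" then show ?thesis using w(3) stp_upd by metis
    next
      assume "i = k" then show ?thesis using s w(2) by simp
    qed
  qed
  moreover have "Mv A ((w(Suc k := y)) 0)" using w by simp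
  ultimately show ?thesis unfolding Wk_def by (intro exI[of _ "w(Suc k := y)"]) simp
qed

lemma Wk_even: "Wk A k x \<Longrightarrow> even k \<Longrightarrow> A x y \<Longrightarrow> Wk A (Suc k) y"
  by (erule Wk_ext) (simp add: stp_def)

lemma Wk_odd: "Wk A k y \<Longrightarrow> odd k \<Longrightarrow> A x y \<Longrightarrow> Wk A (Suc k) x"
  by (erule Wk_ext) (simp add: stp_def)

lemma Wk_in: "Wk A k x \<Longrightarrow> odd k \<Longrightarrow> \<exists>a. A a x"
proof -
  assume W: "Wk A k x" and o: "odd k"
  then obtain w where w: "w k = x" "\<forall>i<k. stp A w i"
    unfolding Wk_def by blast
  obtain j where j: "k = Suc j" using o by (cases k) auto
  then have "even j" using o by auto
  moreover have "stp A w j" using w(2) j by simp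
  ultimately have "A (w j) (w k)" using j unfolding stp_def by simp
  then show ?thesis using w(1) by blast
qed

lemma Wk_out: "Wk A k x \<Longrightarrow> even k \<Longrightarrow> \<exists>b. A x b"
proof -
  assume W: "Wk A k x" and o: "even k"
  then obtain w where w: "Mv A (w 0)" "w k = x" "\<forall>i<k. stp A w i"
    unfolding Wk_def by blast
  show ?thesis
  proof (cases k)
    case 0 then show ?thesis using w unfolding Mv_def by auto
  next
    case (Suc j)
    then have "odd j" using o by auto
    moreover have "stp A w j" using w(3) Suc by simp
    ultimately have "A (w k) (w j)" using Suc unfolding stp_def by simp
    then show ?thesis using w(2) by blast
  qed
qed

lemma Wk_bounce: "Wk A k x \<Longrightarrow> Wk A (k+2) x"
proof -
  assume W: "Wk A k x"
  show ?thesis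
  proof (cases "even k")
    case True
    obtain b where b: "A x b" using Wk_out[OF W True] by blast
    have 1: "Wk A (Suc k) b" using Wk_even[OF W True b] .
    have "odd (Suc k)" using True by simp
    then have "Wk A (Suc (Suc k)) x" using Wk_odd[OF 1 _ b] by blast
    then show ?thesis by (simp add: numeral_2_eq_2)
  next
    case False
    obtain a where a: "A a x" using Wk_in[OF W False] by blast
    have 1: "Wk A (Suc k) a" using Wk_odd[OF W False a] .
    have "even (Suc k)" using False by simp
    then have "Wk A (Suc (Suc k)) x" using Wk_even[OF 1 _ a] by blast
    then show ?thesis by (simp add: numeral_2_eq_2)
  qed
qed

lemma Wk_up: "Wk A k x \<Longrightarrow> Wk A (k + 2*j) x"
proof (induction j)
  case 0 then show ?case by simp
next
  case (Suc j)
  have "Wk A (k + 2*j) x" using Suc.IH Suc.prems by blast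
  then have w2: "Wk A (k + 2*j + 2) x" by (rule Wk_bounce)
  have eq: "k + 2 * Suc j = k + 2*j + 2" by simp
  show ?case unfolding eq by (rule w2)
qed



lemma forward:
  assumes ug: "undirected_graph V E" and ev: "even n" and n4: "4 \<le> n"
    and hom: "is_hom V E {0..<n-1} (cycle_adj (n-1)) c"
  shows "\<exists>A. is_orientation E A \<and> \<not> (\<exists>VH AH. in_F n VH AH \<and> has_induced_copy V A VH AH)"
proof -
  define m where "m = n - 1"
  have m3: "3 \<le> m" and nm: "n = m + 1" using n4 unfolding m_def by auto
  have om: "odd m" using ev n4 unfolding m_def by simp
  define A where "A x y \<longleftrightarrow> E x y \<and> Ocyc m (c x) (c y)" for x y
  have Ec: "E x y \<Longrightarrow> cycle_adj m (c x) (c y)" for x y using hom unfolding is_hom_def m_def by auto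
  have Esym: "E x y \<Longrightarrow> E y x" for x y using ug unfolding undirected_graph_def by auto
  have orient: "is_orientation E A"
    unfolding is_orientation_def
  proof (intro conjI allI impI)
    fix x y assume "A x y" then show "E x y" unfolding A_def by simp
  next
    fix x y assume "E x y"
    then have "Ocyc m (c x) (c y) \<or> Ocyc m (c y) (c x)" using O_total[OF om m3] Ec by blast
    then show "A x y \<or> A y x" using \<open>E x y\<close> Esym unfolding A_def by blast
  next
    fix x y show "\<not> (A x y \<and> A y x)" using O_anti[OF om m3] unfolding A_def by blast
  qed
  moreover have "\<not> (\<exists>VH AH. in_F n VH AH \<and> has_induced_copy V A VH AH)"
  proof
    assume "\<exists>VH AH. in_F n VH AH \<and> has_induced_copy V A VH AH"
    then obtain VH AH where F: "in_F n VH AH" and C: "has_induced_copy V A VH AH" by blast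
    from F obtain Q h where Q: "is_Q n Q" and hh: "is_hom {0..<n} Q VH AH h"
      unfolding in_F_def by blast
    from C obtain e where ind: "\<forall>x\<in>VH. \<forall>y\<in>VH. AH x y \<longleftrightarrow> A (e x) (e y)"
      unfolding has_induced_copy_def by blast
    define p where "p i = c (e (h i))" for i
    have arcQ: "Q i j \<Longrightarrow> Ocyc m (p i) (p j)" for i j
    proof -
      assume q: "Q i j"
      then have "i < n" "j < n" using Q unfolding is_Q_def by auto
      then have "h i \<in> VH" "h j \<in> VH" "AH (h i) (h j)" using hh q unfolding is_hom_def by auto
      then show ?thesis using ind unfolding A_def p_def by auto
    qed
    show False
    proof (rule no_walk[OF om m3 nm, of p])
      fix i assume "i + 1 < n"
      then show "if dirf n i then Ocyc m (p i) (p (i+1)) else Ocyc m (p (i+1)) (p i)"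
        using Qdir[OF Q ev, of i] arcQ by auto
    qed
  qed
  ultimately show ?thesis by blast
qed



lemma hom_to_copy:
  assumes ug: "undirected_graph V E" and ori: "is_orientation E A" and Q: "is_Q n Q"
    and hA: "\<And>i j. Q i j \<Longrightarrow> A (h i) (h j)"
  shows "\<exists>VH AH. in_F n VH AH \<and> has_induced_copy V A VH AH"
proof -
  have AE: "A x y \<Longrightarrow> E x y" for x y using ori unfolding is_orientation_def by blast
  have EV: "E x y \<Longrightarrow> x \<in> V \<and> y \<in> V" for x y using ug unfolding undirected_graph_def by blast
  have Eirr: "\<not> E x x" for x using ug unfolding undirected_graph_def by blast
  have Aanti: "\<not> (A x y \<and> A y x)" for x y using ori unfolding is_orientation_def by blast
  have n3: "3 \<le> n" using Q unfolding is_Q_def by blast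
  have cl: "\<forall>j. j+1<n \<longrightarrow> (Q j (j+1) \<or> Q (j+1) j)"
    using Q unfolding is_Q_def by blast
  have hV: "h i \<in> V" if i: "i < n" for i
  proof (cases "i + 1 < n")
    case True
    then have "Q i (i+1) \<or> Q (i+1) i" using cl by blast
    then show ?thesis using hA AE EV by blast
  next
    case False
    then have ii: "i = (n-2) + 1" using i n3 by auto
    have "n - 2 + 1 < n" using n3 by auto
    then have "Q (n-2) i \<or> Q i (n-2)" using cl ii by blast
    then show ?thesis using hA AE EV by blast
  qed
  define r where "r i = (LEAST j. h j = h i)" for i
  have rh: "h (r i) = h i" for i unfolding r_def by (rule LeastI[of "\<lambda>j. h j = h i" i]) simp
  have rle: "r i \<le> i" for i unfolding r_def by (rule Least_le) simp
  define VH where "VH = r ` {0..<n}"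
  define AH where "AH x y \<longleftrightarrow> x \<in> VH \<and> y \<in> VH \<and> A (h x) (h y)" for x y
  have og: "oriented_graph VH AH"
    unfolding oriented_graph_def AH_def using Aanti AE Eirr by blast
  have Qlt: "Q i j \<Longrightarrow> i < n \<and> j < n" for i j using Q unfolding is_Q_def by blast
  have hom: "is_hom {0..<n} Q VH AH r"
    unfolding is_hom_def
  proof (intro conjI allI impI ballI)
    fix x assume "x \<in> {0..<n}" then show "r x \<in> VH" unfolding VH_def by blast
  next
    fix x y assume q: "Q x y"
    then have "r x \<in> VH" "r y \<in> VH" using Qlt unfolding VH_def by auto
    moreover have "A (h (r x)) (h (r y))" using hA[OF q] rh by simp
    ultimately show "AH (r x) (r y)" unfolding AH_def by blast
  qed
  have inF: "in_F n VH AH" unfolding in_F_def using og Q hom VH_def by blast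
  have inj: "inj_on h VH"
  proof (rule inj_onI)
    fix x y assume "x \<in> VH" "y \<in> VH" "h x = h y"
    then obtain i j where "x = r i" "y = r j" unfolding VH_def by blast
    then have "h i = h j" using rh \<open>h x = h y\<close> by metis
    then show "x = y" using \<open>x = r i\<close> \<open>y = r j\<close> unfolding r_def by simp
  qed
  have sub: "h ` VH \<subseteq> V"
  proof
    fix v assume "v \<in> h ` VH"
    then obtain i where "i < n" "v = h (r i)" unfolding VH_def by auto
    then show "v \<in> V" using hV[of "r i"] rle[of i] by simp
  qed
  have "has_induced_copy V A VH AH"
    unfolding has_induced_copy_def using inj sub unfolding AH_def by blast
  then show ?thesis using inF by blast
qed



lemma key_lemma:
  assumes ug: "undirected_graph V E" and ev: "even n" and n4: "4 \<le> n"
    and ori: "is_orientation E A"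
    and nf: "\<not> (\<exists>VH AH. in_F n VH AH \<and> has_induced_copy V A VH AH)"
    and W: "Wk A k v" and ok: "odd k" and kle: "k + 2 \<le> n - 1" and vz: "A v z"
  shows False
proof -
  define j where "j = (n - 3 - k) div 2"
  have kj: "k + 2*j = n - 3" unfolding j_def using ok ev kle n4 by presburger
  have W3: "Wk A (n-3) v" using Wk_up[OF W, of j] kj by simp
  then obtain w where w0: "Mv A (w 0)" and wv: "w (n-3) = v" and ws: "\<forall>i<n-3. stp A w i"
    unfolding Wk_def by blast
  obtain a where a: "A a (w 0)" using w0 unfolding Mv_def by blast
  define h where "h i = (if i = 0 then a else if i \<le> n-2 then w (i-1) else z)" for i
  define Q where "Q i j \<longleftrightarrow> (j = i+1 \<and> i+1<n \<and> dirf n i) \<or> (i = j+1 \<and> j+1<n \<and> \<not> dirf n j)" for i j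
  have Qf: "i + 1 < n \<Longrightarrow> Q i (i+1) \<longleftrightarrow> dirf n i" for i unfolding Q_def by auto
  have Qb: "i + 1 < n \<Longrightarrow> Q (i+1) i \<longleftrightarrow> \<not> dirf n i" for i unfolding Q_def by auto
  have q1: "\<forall>i j. Q i j \<longrightarrow> i < n \<and> j < n \<and> (j = i + 1 \<or> i = j + 1)" unfolding Q_def by auto
  have q2: "\<forall>i. i + 1 < n \<longrightarrow> (Q i (i + 1) \<or> Q (i + 1) i) \<and> \<not> (Q i (i + 1) \<and> Q (i + 1) i)"
    using Qf Qb by blast
  have q3: "Q 0 1" using Qf[of 0] n4 unfolding dirf_def by simp
  have "Q 1 (1+1)" using Qf[of 1] n4 unfolding dirf_def by simp
  then have q4: "Q 1 2" by (simp add: numeral_2_eq_2)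
  have q5: "\<forall>i. 1 \<le> i \<and> i + 2 \<le> n - 2 \<longrightarrow> (Q i (i + 1) \<longleftrightarrow> Q (i + 2) (i + 1))"
  proof (intro allI impI)
    fix i assume i: "1 \<le> i \<and> i + 2 \<le> n - 2"
    have i1: "i + 1 < n" "i \<noteq> 0" "i \<noteq> n - 2" "i + 1 + 1 < n" "i + 1 \<noteq> 0" "i + 1 \<noteq> n - 2" using i by auto
    have "Q i (i+1) \<longleftrightarrow> dirf n i" using Qf[OF i1(1)] .
    then have "Q i (i+1) \<longleftrightarrow> odd i" using i1 unfolding dirf_def by simp
    moreover have "Q (i+1+1) (i+1) \<longleftrightarrow> \<not> dirf n (i+1)" using Qb[OF i1(4)] .
    then have "Q (i+1+1) (i+1) \<longleftrightarrow> \<not> odd (i+1)" using i1 unfolding dirf_def by simp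
    moreover have "i + 1 + 1 = i + 2" by simp
    ultimately show "Q i (i + 1) = Q (i + 2) (i + 1)" by auto
  qed
  have q6: "Q (n - 3) (n - 2) = Q (n - 2) (n - 1)"
  proof -
    have e1: "n - 3 + 1 = n - 2" "n - 2 + 1 = n - 1" using n4 by auto
    have "Q (n-3) (n-3+1)" using Qf[of "n-3"] n4 ev unfolding dirf_def by auto
    moreover have "Q (n-2) (n-2+1)" using Qf[of "n-2"] n4 unfolding dirf_def by auto
    ultimately show ?thesis using e1 by simp
  qed
  have isQ: "is_Q n Q" unfolding is_Q_def using n4 q1 q2 q3 q4 q5 q6 by simp
  have hA: "A (h i) (h j)" if q: "Q i j" for i j
  proof -
    from q have "(j = i+1 \<and> i+1<n \<and> dirf n i) \<or> (i = j+1 \<and> j+1<n \<and> \<not> dirf n j)" unfolding Q_def .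
    then show ?thesis
    proof
      assume c1: "j = i+1 \<and> i+1<n \<and> dirf n i"
      show ?thesis
      proof (cases "i = 0")
        case True
        then show ?thesis using c1 a n4 unfolding h_def by auto
      next
        case nz: False
        show ?thesis
        proof (cases "i = n - 2")
          case True
          then have "h i = v" "h j = z" using c1 n4 wv unfolding h_def by (auto simp: numeral_3_eq_3)
          then show ?thesis using vz by simp
        next
          case False
          then have oi: "odd i" using c1 nz unfolding dirf_def by auto
          have i1: "i + 1 < n" using c1 by simp
          have il: "i - 1 < n - 3" using oi ev i1 False n4 by presburger
          have "stp A w (i-1)" using ws il by blast
          moreover have "even (i-1)" using oi nz by simp
          moreover have "Suc (i-1) = i" using nz by simp
          ultimately have "A (w (i-1)) (w i)" unfolding stp_def by simp
          moreover have "h i = w (i-1)" "h j = w i" using c1 nz False n4 unfolding h_def by auto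
          ultimately show ?thesis by simp
        qed
      qed
    next
      assume c2: "i = j+1 \<and> j+1<n \<and> \<not> dirf n j"
      then have ej: "even j" "j \<noteq> 0" "j \<noteq> n - 2" unfolding dirf_def by auto
      have j1: "j + 1 < n" using c2 by simp
      have jl: "j - 1 < n - 3" "j + 1 \<le> n - 2" using ej ev j1 n4 by presburger+
      have "stp A w (j-1)" using ws jl by blast
      moreover have "odd (j-1)" using ej by simp
      moreover have "Suc (j-1) = j" using ej by simp
      ultimately have "A (w j) (w (j-1))" unfolding stp_def by simp
      moreover have "h i = w j" "h j = w (j-1)" using c2 ej jl unfolding h_def by auto
      ultimately show ?thesis by simp
    qed
  qed
  have "\<exists>VH AH. in_F n VH AH \<and> has_induced_copy V A VH AH"
    by (rule hom_to_copy[OF ug ori isQ, of h]) (rule hA)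
  then show False using nf by blast
qed



lemma backward:
  assumes ug: "undirected_graph V E" and ev: "even n" and n4: "4 \<le> n"
    and ori: "is_orientation E A"
    and nf: "\<not> (\<exists>VH AH. in_F n VH AH \<and> has_induced_copy V A VH AH)"
  shows "\<exists>c. is_hom V E {0..<n-1} (cycle_adj (n-1)) c"
proof -
  define m where "m = n - 1"
  have m3: "3 \<le> m" and nm: "n = m + 1" using n4 unfolding m_def by auto
  have om: "odd m" using ev n4 unfolding m_def by simp
  have key: "Wk A k v \<Longrightarrow> odd k \<Longrightarrow> k + 2 \<le> m \<Longrightarrow> A v z \<Longrightarrow> False" for k v z
    by (rule key_lemma[OF ug ev n4 ori nf, of k v z]) (simp_all add: m_def)
  have srcpar: "\<not> (\<exists>a. A a x) \<Longrightarrow> Wk A k x \<Longrightarrow> even k" for k x using Wk_in[of A k x] by blast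
  have sinkpar: "\<not> (\<exists>b. A x b) \<Longrightarrow> Wk A k x \<Longrightarrow> odd k" for k x using Wk_out[of A k x] by blast
  define c where "c x = (if Mv A x then 0 else if (\<exists>b. A x b)
      then (if \<exists>k<m-1. Wk A k x then (LEAST k. Wk A k x) else m-1)
      else (if \<exists>k<m. Wk A k x then (LEAST k. Wk A k x) else 0))" for x
  have c_sink: "c x = (if \<exists>k<m. Wk A k x then (LEAST k. Wk A k x) else 0)"
    if "\<not> Mv A x" "\<not> (\<exists>b. A x b)" for x
    unfolding c_def by (subst if_not_P, rule that)+ (rule refl)
  have c_src: "c x = (if \<exists>k<m-1. Wk A k x then (LEAST k. Wk A k x) else m-1)"
    if "\<not> Mv A x" "(\<exists>b. A x b)" for x
    unfolding c_def by (subst if_not_P, rule that, subst if_P, rule that) (rule refl)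
  have Lle: "Wk A k x \<Longrightarrow> (LEAST k. Wk A k x) \<le> k" for k x by (rule Least_le)
  have LI: "Wk A k x \<Longrightarrow> Wk A (LEAST k. Wk A k x) x" for k x by (rule LeastI)
  have crange: "c x < m" for x
  proof -
    have a: "(LEAST k. Wk A k x) < m" if ex: "\<exists>k<m. Wk A k x"
    proof -
      obtain k where "k < m" "Wk A k x" using ex by blast
      then show ?thesis using Lle[of k x] by simp
    qed
    have b: "(\<exists>k<m. Wk A k x)" if ex2: "\<exists>k<m-1. Wk A k x"
    proof -
      obtain k where k: "k < m - 1" "Wk A k x" using ex2 by blast
      then have "k < m" by simp
      then show ?thesis using k(2) by blast
    qed
    show ?thesis unfolding c_def using m3 a b by simp
  qed
  have arc: "cycle_adj m (c x) (c y)" if xy: "A x y" for x y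
  proof -
    have yin: "\<exists>a. A a y" and xout: "\<exists>b. A x b" using xy by blast+
    show ?thesis
    proof (cases "Mv A x")
      case True
      have W1: "Wk A (Suc 0) y" using Wk_even[OF Wk_0[OF True] _ xy] by simp
      have nMy: "\<not> Mv A y"
      proof
        assume "Mv A y"
        then obtain z where "A y z" unfolding Mv_def by blast
        then show False using key[OF W1 _ _ \<open>A y z\<close>] m3 by simp
      qed
      then have ynout: "\<not> (\<exists>b. A y b)" using yin unfolding Mv_def by blast
      have l1: "(LEAST k. Wk A k y) \<le> 1" using Lle[OF W1] by simp
      have "odd (LEAST k. Wk A k y)" using sinkpar[OF ynout LI[OF W1]] .
      moreover have aux: "\<And>l::nat. odd l \<Longrightarrow> l \<le> 1 \<Longrightarrow> l = 1" by presburger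
      ultimately have l: "(LEAST k. Wk A k y) = 1" using l1 by blast
      have exy: "\<exists>k<m. Wk A k y" using W1 m3 by (intro exI[of _ "Suc 0"]) simp
      have ey: "Ex (A y) = False" using ynout by blast
      have "c y = 1" unfolding c_sink[OF nMy ynout] if_P[OF exy] by (rule l)
      moreover have "c x = 0" unfolding c_def using True by simp
      ultimately show ?thesis using m3 by (simp add: cyc_iff)
    next
      case nMx: False
      then have xnin: "\<not> (\<exists>a. A a x)" using xout unfolding Mv_def by blast
      have ex: "Ex (A x) = True" using xout by blast
      show ?thesis
      proof (cases "Mv A y")
        case True
        then obtain z where yz: "A y z" unfolding Mv_def by blast
        have no: "\<not> (\<exists>k<m-1. Wk A k x)"
        proof
          assume "\<exists>k<m-1. Wk A k x"
          then obtain k where k: "k < m - 1" "Wk A k x" by blast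
          have ek: "even k" using srcpar[OF xnin k(2)] .
          have W: "Wk A (Suc k) y" using Wk_even[OF k(2) ek xy] .
          have "Suc k + 2 \<le> m" using ek om k(1) by presburger
          then show False using key[OF W _ _ yz] ek by simp
        qed
        have "c x = m - 1" unfolding c_src[OF nMx xout] if_not_P[OF no] by (rule refl)
        moreover have "c y = 0" unfolding c_def using True by simp
        ultimately show ?thesis using m3 by (simp add: cyc_iff)
      next
        case nMy: False
        then have ynout: "\<not> (\<exists>b. A y b)" using yin unfolding Mv_def by blast
        have ey: "Ex (A y) = False" using ynout by blast
        have cy: "c y = (if \<exists>k<m. Wk A k y then (LEAST k. Wk A k y) else 0)"
          by (rule c_sink[OF nMy ynout])
        show ?thesis
        proof (cases "\<exists>k<m-1. Wk A k x")
          case True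
          then obtain k where k: "k < m - 1" "Wk A k x" by blast
          define e where "e = (LEAST k. Wk A k x)"
          have We: "Wk A e x" unfolding e_def using LI[OF k(2)] .
          have el: "e < m - 1" using Lle[OF k(2)] k(1) unfolding e_def by simp
          have ee: "even e" using srcpar[OF xnin We] .
          have cx: "c x = e" unfolding c_src[OF nMx xout] e_def if_P[OF True] by (rule refl)
          have W1: "Wk A (Suc e) y" using Wk_even[OF We ee xy] .
          define ov where "ov = (LEAST k. Wk A k y)"
          have Wo: "Wk A ov y" unfolding ov_def using LI[OF W1] .
          have ol: "ov \<le> Suc e" using Lle[OF W1] unfolding ov_def .
          have oo: "odd ov" using sinkpar[OF ynout Wo] .
          have "Wk A (Suc ov) x" using Wk_odd[OF Wo oo xy] .
          then have "e \<le> Suc ov" using Lle unfolding e_def by blast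
          then have adj: "ov = e + 1 \<or> e = ov + 1" using ol ee oo by presburger
          have "ov < m" using ol el by simp
          moreover have exy: "\<exists>k<m. Wk A k y" using W1 el by (intro exI[of _ "Suc e"]) simp
          have "c y = ov" unfolding cy ov_def if_P[OF exy] by (rule refl)
          then show ?thesis using cx adj el \<open>ov < m\<close> m3 by (auto simp: cyc_iff)
        next
          case False
          have cx: "c x = m - 1" unfolding c_src[OF nMx xout] if_not_P[OF False] by (rule refl)
          show ?thesis
          proof (cases "\<exists>k<m. Wk A k y")
            case True
            then obtain k where k: "k < m" "Wk A k y" by blast
            define ov where "ov = (LEAST k. Wk A k y)"
            have Wo: "Wk A ov y" unfolding ov_def using LI[OF k(2)] .
            have ol: "ov < m" using Lle[OF k(2)] k(1) unfolding ov_def by simp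
            have oo: "odd ov" using sinkpar[OF ynout Wo] .
            have "Wk A (Suc ov) x" using Wk_odd[OF Wo oo xy] .
            then have "\<not> (Suc ov < m - 1)" using False by blast
            then have oe: "ov = m - 2" using ol oo om by presburger
            have "c y = ov" unfolding cy ov_def if_P[OF True] by (rule refl)
            then show ?thesis using cx oe m3 by (auto simp: cyc_iff)
          next
            case False
            have "c y = 0" unfolding cy if_not_P[OF False] by (rule refl)
            then show ?thesis using cx m3 by (auto simp: cyc_iff)
          qed
        qed
      qed
    qed
  qed
  have sym: "cycle_adj m i j \<Longrightarrow> cycle_adj m j i" for i j unfolding cycle_adj_def by blast
  have "is_hom V E {0..<m} (cycle_adj m) c"
    unfolding is_hom_def
  proof (intro conjI ballI allI impI)
    fix x show "c x \<in> {0..<m}" using crange by simp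
  next
    fix x y assume "E x y"
    then have "A x y \<or> A y x" using ori unfolding is_orientation_def by blast
    then show "cycle_adj m (c x) (c y)" using arc sym by blast
  qed
  then show ?thesis unfolding m_def by blast
qed

theorem mainTheorem11:
  fixes V :: "'a set" and E :: "'a \<Rightarrow> 'a \<Rightarrow> bool" and n :: nat
  assumes "finite V" and "undirected_graph V E" and "even n" and "4 \<le> n"
  shows "(\<exists>c. is_hom V E {0..<n-1} (cycle_adj (n-1)) c) \<longleftrightarrow>
         (\<exists>A. is_orientation E A \<and>
              \<not> (\<exists>VH AH. in_F n VH AH \<and> has_induced_copy V A VH AH))"
proof
  assume "\<exists>c. is_hom V E {0..<n-1} (cycle_adj (n-1)) c"
  then obtain c where "is_hom V E {0..<n-1} (cycle_adj (n-1)) c" by blast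
  then show "\<exists>A. is_orientation E A \<and> \<not> (\<exists>VH AH. in_F n VH AH \<and> has_induced_copy V A VH AH)"
    using forward[OF assms(2,3,4)] by blast
next
  assume "\<exists>A. is_orientation E A \<and> \<not> (\<exists>VH AH. in_F n VH AH \<and> has_induced_copy V A VH AH)"
  then obtain A where "is_orientation E A" "\<not> (\<exists>VH AH. in_F n VH AH \<and> has_induced_copy V A VH AH)" by blast
  then show "\<exists>c. is_hom V E {0..<n-1} (cycle_adj (n-1)) c"
    using backward[OF assms(2,3,4)] by blast
qed


end
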